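(* Let $\mathbb{K}$ be any field and $n\geq 3$. Let $S$ be a linear subspace of $\mathrm{S}_n(\mathbb{K})$ in which every matrix has rank at most $2$. For $M\in S$ let $P(M)\in\mathrm{S}_{n-1}(\mathbb{K})$ be the upper-left $(n-1)\times(n-1)$ submatrix of $M$. Assume that $P(S)\subset\mathrm{WS}_{n-1,1,0}(\mathbb{K})$ and $\dim P(S)>2$. Then $S$ is congruent to a subspace of $\mathrm{WS}_{n,1,0}(\mathbb{K})$.
   Context: $\mathrm{S}_p(\mathbb{K})$ denotes the $p\times p$ symmetric matrices. $\mathrm{WS}_{p,1,0}(\mathbb{K})$ is the space of $M=(m_{i,j})\in\mathrm{S}_p(\mathbb{K})$ with $m_{i,j}=0$ whenever $i>1$ and $j>1$. Subsets $\mathcal{V},\mathcal{W}$ of $\mathrm{M}_n(\mathbb{K})$ are congruent if $\mathcal{V}=Q\mathcal{W}Q^T$ for some $Q\in\mathrm{GL}_n(\mathbb{K})$. *)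

theory Defs
  imports "Jordan_Normal_Form.DL_Rank"
begin

text \<open>Matrices are Jordan_Normal_Form matrices with explicit dimensions; indices are 0-based,
so the paper's condition "i > 1 and j > 1" becomes "i \<ge> 1 and j \<ge> 1".\<close>

definition sym_mats :: "nat \<Rightarrow> 'a::field mat set" where
  "sym_mats p = {M \<in> carrier_mat p p. transpose_mat M = M}"

definition WS_10 :: "nat \<Rightarrow> 'a::field mat set" where
  "WS_10 p = {M \<in> sym_mats p. \<forall>i j. 0 < i \<longrightarrow> 0 < j \<longrightarrow> i < p \<longrightarrow> j < p \<longrightarrow> M $$ (i, j) = 0}"

definition mat_subspace :: "nat \<Rightarrow> 'a::field mat set \<Rightarrow> bool" where
  "mat_subspace p W = subspace class_ring W (module_mat TYPE('a) p p)"

definition mat_subspace_dim :: "nat \<Rightarrow> 'a::field mat set \<Rightarrow> nat" where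
  "mat_subspace_dim p W = vectorspace.dim class_ring ((module_mat TYPE('a) p p)\<lparr>carrier := W\<rparr>)"

definition mat_rank :: "'a::field mat \<Rightarrow> nat" where
  "mat_rank A = vec_space.rank (dim_row A) A"

definition upper_left :: "nat \<Rightarrow> 'a mat \<Rightarrow> 'a mat" where
  "upper_left p M = mat (p - 1) (p - 1) (\<lambda>(i, j). M $$ (i, j))"

definition congruent_sets :: "nat \<Rightarrow> 'a::field mat set \<Rightarrow> 'a mat set \<Rightarrow> bool" where
  "congruent_sets n V W \<longleftrightarrow> (\<exists>Q \<in> carrier_mat n n. invertible_mat Q \<and>
      V = (\<lambda>M. Q * M * transpose_mat Q) ` W)"

end

theory Submission imports Defs "Jordan_Normal_Form.DL_Rank_Submatrix" "Jordan_Normal_Form.Determinant"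
  "Jordan_Normal_Form.Gauss_Jordan_Elimination" "Jordan_Normal_Form.Column_Operations"
begin


lemma det1: "det (A::'a::comm_ring_1 mat) = A $$ (0,0)" if "A \<in> carrier_mat 1 1"
  using that by (subst laplace_expansion_row[of A 1 0]) (auto simp: cofactor_def det_def)
lemma det2: "det (A::'a::comm_ring_1 mat) = A $$ (0,0) * A $$ (1,1) - A $$ (0,1) * A $$ (1,0)" if "A \<in> carrier_mat 2 2"
proof -
  have c: "\<And>j. mat_delete A 0 j \<in> carrier_mat 1 1" using mat_delete_carrier[OF that] by simp
  show ?thesis using that apply (subst laplace_expansion_row[of A 2 0]) apply auto
  apply (auto simp: cofactor_def det1[OF c])
  apply (auto simp: mat_delete_def numeral_2_eq_2 lessThan_Suc)
  done
qed
lemma det3: "det (A::'a::comm_ring_1 mat) = A $$ (0,0) * (A $$ (1,1) * A $$ (2,2) - A $$ (1,2) * A $$ (2,1))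
   - A $$ (0,1) * (A $$ (1,0) * A $$ (2,2) - A $$ (1,2) * A $$ (2,0))
   + A $$ (0,2) * (A $$ (1,0) * A $$ (2,1) - A $$ (1,1) * A $$ (2,0))" if "A \<in> carrier_mat 3 3"
proof -
  have c: "\<And>j. mat_delete A 0 j \<in> carrier_mat 2 2" using mat_delete_carrier[OF that] by simp
  show ?thesis using that apply (subst laplace_expansion_row[of A 3 0]) apply auto
  apply (auto simp: cofactor_def det2[OF c])
  apply (auto simp: mat_delete_def numeral_3_eq_3 numeral_2_eq_2 lessThan_Suc algebra_simps)
  done
qed

lemma pick3: assumes "(a::nat) < b" "b < c"
  shows "pick {a,b,c} 0 = a" "pick {a,b,c} (Suc 0) = b" "pick {a,b,c} 2 = c"
proof -
  show p0: "pick {a,b,c} 0 = a" using assms by (auto intro!: Least_equality)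
  show p1: "pick {a,b,c} (Suc 0) = b" using assms p0 by (auto intro!: Least_equality)
  show "pick {a,b,c} 2 = c" using assms p1 by (auto simp: numeral_2_eq_2 intro!: Least_equality)
qed

lemma card3: assumes "(a::nat) < b" "b < c" "c < n" shows "card {i. i < n \<and> i \<in> {a,b,c}} = 3"
proof -
  have "{i. i < n \<and> i \<in> {a,b,c}} = {a,b,c}" using assms by auto
  thus ?thesis using assms by simp
qed

lemma minor3:
  fixes M :: "'a::field mat"
  assumes M: "M \<in> carrier_mat n n" and r: "r0<r1" "r1<r2" "r2<n" and c: "c0<c1" "c1<c2" "c2<n"
    and rk: "vec_space.rank n M \<le> 2"
  shows "M$$(r0,c0) * (M$$(r1,c1)*M$$(r2,c2) - M$$(r1,c2)*M$$(r2,c1))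
   - M$$(r0,c1)*(M$$(r1,c0)*M$$(r2,c2) - M$$(r1,c2)*M$$(r2,c0))
   + M$$(r0,c2)*(M$$(r1,c0)*M$$(r2,c1) - M$$(r1,c1)*M$$(r2,c0)) = 0"
proof (rule ccontr)
  assume ne: "\<not> ?thesis"
  let ?A = "submatrix M {r0,r1,r2} {c0,c1,c2}"
  have dM: "dim_row M = n" "dim_col M = n" using M by auto
  have cr: "card {i. i < dim_row M \<and> i \<in> {r0,r1,r2}} = 3" unfolding dM using card3[OF r] .
  have cc: "card {i. i < dim_col M \<and> i \<in> {c0,c1,c2}} = 3" unfolding dM using card3[OF c] .
  have Ac: "?A \<in> carrier_mat 3 3" by (rule carrier_matI) (simp_all only: dim_submatrix cr cc)
  have e: "\<And>i j. i < 3 \<Longrightarrow> j < 3 \<Longrightarrow> ?A $$ (i,j) = M $$ (pick {r0,r1,r2} i, pick {c0,c1,c2} j)"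
    using cr cc by (intro submatrix_index) auto
  have p: "pick {r0,r1,r2} 0 = r0" "pick {r0,r1,r2} (Suc 0) = r1" "pick {r0,r1,r2} 2 = r2"
    "pick {c0,c1,c2} 0 = c0" "pick {c0,c1,c2} (Suc 0) = c1" "pick {c0,c1,c2} 2 = c2"
    using pick3[OF r(1,2)] pick3[OF c(1,2)] by auto
  have "det ?A = M$$(r0,c0) * (M$$(r1,c1)*M$$(r2,c2) - M$$(r1,c2)*M$$(r2,c1))
   - M$$(r0,c1)*(M$$(r1,c0)*M$$(r2,c2) - M$$(r1,c2)*M$$(r2,c0))
   + M$$(r0,c2)*(M$$(r1,c0)*M$$(r2,c1) - M$$(r1,c1)*M$$(r2,c0))"
    unfolding det3[OF Ac] by (simp add: e p del: pick.simps)
  hence "det ?A \<noteq> 0" using ne by simp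
  from vec_space.rank_gt_minor[OF M this] have "card {j. j < n \<and> j \<in> {c0,c1,c2}} \<le> vec_space.rank n M" .
  with card3[OF c] rk show False by simp
qed

lemma mat_subspace_iff:
  "mat_subspace n (W::'a::field mat set) \<longleftrightarrow> W \<subseteq> carrier_mat n n \<and> 0\<^sub>m n n \<in> W \<and>
     (\<forall>A\<in>W. \<forall>B\<in>W. A + B \<in> W) \<and> (\<forall>c. \<forall>A\<in>W. c \<cdot>\<^sub>m A \<in> W)"
  unfolding mat_subspace_def VectorSpace.subspace_def LinearCombinations.submodule_def
  using matrix_vs[where 'a='a and nr=n and nc=n] vectorspace.axioms(1)[OF matrix_vs[where 'a='a and nr=n and nc=n]]
  by (auto simp: module_mat_simps class_ring_simps)

lemma (in vectorspace) subspace_dim_le_gen: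
  assumes X: "VectorSpace.subspace K X V" and XG: "X \<subseteq> span G" and fG: "finite G" and GC: "G \<subseteq> carrier V"
  shows "vectorspace.dim K (vs X) \<le> card G"
proof -
  have VX: "vectorspace K (vs X)" by (rule subspace_is_vs[OF X])
  have smX: "submodule K X V" using X by (simp add: VectorSpace.subspace_def)
  have spS: "VectorSpace.subspace K (span G) V" by (rule span_is_subspace[OF GC])
  have smS: "submodule K (span G) V" by (rule span_is_submodule[OF GC])
  have VS: "vectorspace K (vs (span G))" by (rule subspace_is_vs[OF spS])
  have GS: "G \<subseteq> span G" by (rule in_own_span[OF GC])
  have gen: "LinearCombinations.module.span K (vs (span G)) G = carrier (vs (span G))"
    using span_li_not_depend(1)[OF GS smS] by simp
  have fd: "vectorspace.fin_dim K (vs (span G))"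
    unfolding vectorspace.fin_dim_def[OF VS] using fG GS gen by auto
  have dS: "vectorspace.dim K (vs (span G)) \<le> card G"
    using vectorspace.gen_ge_dim[OF VS fG] GS gen by auto
  have bound: "finite L \<and> card L \<le> card G"
    if L: "L \<subseteq> X \<and> \<not> LinearCombinations.module.lin_dep K (vs X) L" for L
  proof -
    have "\<not> lin_dep L" using L span_li_not_depend(2)[OF _ smX, of L] by auto
    moreover have LS: "L \<subseteq> span G" using L XG by auto
    ultimately have "\<not> LinearCombinations.module.lin_dep K (vs (span G)) L"
      using span_li_not_depend(2)[OF LS smS] by auto
    from vectorspace.li_le_dim[OF VS fd _ this] LS dS show ?thesis by auto
  qed
  have e: "{} \<subseteq> X \<and> \<not> LinearCombinations.module.lin_dep K (vs X) {}"
    by (simp add: LinearCombinations.module.lin_dep_def[OF vectorspace.axioms(1)[OF VX]])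
  obtain L where fL: "finite L" and mL: "maximal L (\<lambda>L. L \<subseteq> X \<and> \<not> LinearCombinations.module.lin_dep K (vs X) L)"
    using maximal_exists[of "\<lambda>L. L \<subseteq> X \<and> \<not> LinearCombinations.module.lin_dep K (vs X) L", OF bound e] by blast
  have "vectorspace.basis K (vs X) L"
    using vectorspace.max_li_is_basis[OF VX] mL by simp
  hence "vectorspace.dim K (vs X) = card L" using vectorspace.dim_basis[OF VX fL] by simp
  moreover have "card L \<le> card G" using bound mL unfolding maximal_def by blast
  ultimately show ?thesis by simp
qed

lemma dim_le2:
  fixes X :: "'a::field mat set"
  assumes X: "mat_subspace p X" and A: "A \<in> carrier_mat p p" and B: "B \<in> carrier_mat p p"
    and span: "\<forall>M\<in>X. \<exists>a b. M = a \<cdot>\<^sub>m A + b \<cdot>\<^sub>m B"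
  shows "mat_subspace_dim p X \<le> 2"
proof -
  interpret V: matrix_vs p p "TYPE('a)" .
  have GC: "{A,B} \<subseteq> carrier_mat p p" using A B by auto
  have sm: "submodule class_ring (V.span {A,B}) V.V" by (rule V.span_is_submodule) (use GC in auto)
  have AB: "A \<in> V.span {A,B}" "B \<in> V.span {A,B}" using V.in_own_span[of "{A,B}"] GC by auto
  have "X \<subseteq> V.span {A,B}"
  proof
    fix M assume "M \<in> X"
    then obtain a b where M: "M = a \<cdot>\<^sub>m A + b \<cdot>\<^sub>m B" using span by blast
    have "a \<cdot>\<^sub>m A \<in> V.span {A,B}" "b \<cdot>\<^sub>m B \<in> V.span {A,B}"
      using sm AB unfolding LinearCombinations.submodule_def by (auto simp: class_ring_simps module_mat_simps)
    thus "M \<in> V.span {A,B}" using sm unfolding M LinearCombinations.submodule_def by (auto simp: module_mat_simps)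
  qed
  from V.subspace_dim_le_gen[OF X[unfolded mat_subspace_def] this] GC
  have "vectorspace.dim class_ring (V.vs X) \<le> card {A,B}" by auto
  also have "card {A,B} \<le> 2" by (simp add: card_insert_le_m1)
  finally show ?thesis unfolding mat_subspace_dim_def by simp
qed



locale setup47 =
  fixes S :: "'a::field mat set" and n :: nat
  assumes n3: "n \<ge> 3" and sub: "mat_subspace n S" and symS: "S \<subseteq> sym_mats n"
    and rkS: "\<forall>M \<in> S. mat_rank M \<le> 2" and ulS: "upper_left n ` S \<subseteq> WS_10 (n - 1)"
begin

lemma sub_props: "S \<subseteq> carrier_mat n n" "0\<^sub>m n n \<in> S" "\<And>A B. A \<in> S \<Longrightarrow> B \<in> S \<Longrightarrow> A + B \<in> S"
  "\<And>c A. A \<in> S \<Longrightarrow> c \<cdot>\<^sub>m A \<in> S"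
  using sub unfolding mat_subspace_iff by auto

lemma carr: "M \<in> S \<Longrightarrow> M \<in> carrier_mat n n" using sub_props by auto

lemma symm: assumes "M \<in> S" "i < n" "j < n" shows "M $$ (i,j) = M $$ (j,i)"
proof -
  have "transpose_mat M = M" using symS assms(1) unfolding sym_mats_def by auto
  hence "M $$ (i,j) = transpose_mat M $$ (i,j)" by simp
  also have "\<dots> = M $$ (j,i)" using carr[OF assms(1)] assms by simp
  finally show ?thesis .
qed

lemma zero_mid: assumes "M \<in> S" "0 < i" "i < n - 1" "0 < j" "j < n - 1" shows "M $$ (i,j) = 0"
proof -
  have "upper_left n M \<in> WS_10 (n - 1)" using ulS assms(1) by auto
  hence "upper_left n M $$ (i,j) = 0" using assms unfolding WS_10_def by auto
  thus ?thesis using assms unfolding upper_left_def by simp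
qed

lemma rank2: "M \<in> S \<Longrightarrow> vec_space.rank n M \<le> 2"
  using rkS carr unfolding mat_rank_def by fastforce

lemma add_idx: "M \<in> S \<Longrightarrow> N \<in> S \<Longrightarrow> i < n \<Longrightarrow> j < n \<Longrightarrow> (M + N) $$ (i,j) = M $$ (i,j) + N $$ (i,j)"
  using carr[of N] by auto

lemma FA_lt: assumes M: "M \<in> S" and ij: "0 < i" "i < j" "j < n - 1"
  shows "M$$(i,0)*M$$(j,n-1) = M$$(j,0)*M$$(i,n-1)"
proof (rule ccontr)
  let ?D = "M$$(i,0)*M$$(j,n-1) - M$$(j,0)*M$$(i,n-1)"
  assume "\<not> ?thesis"
  hence D: "?D \<noteq> 0" by simp
  have Mc: "M \<in> carrier_mat n n" by (rule carr[OF M])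
  have e: "M$$(0,i) = M$$(i,0)" "M$$(n-1,i) = M$$(i,n-1)" "M$$(i,i) = 0" "M$$(j,i) = 0"
    using symm[OF M] zero_mid[OF M] ij by auto
  have m1: "M$$(0,0) * (M$$(i,i)*M$$(j,n-1) - M$$(i,n-1)*M$$(j,i))
   - M$$(0,i)*(M$$(i,0)*M$$(j,n-1) - M$$(i,n-1)*M$$(j,0))
   + M$$(0,n-1)*(M$$(i,0)*M$$(j,i) - M$$(i,i)*M$$(j,0)) = 0"
    by (rule minor3[OF Mc _ _ _ _ _ _ rank2[OF M]]) (use ij in auto)
  have m2: "M$$(i,0) * (M$$(j,i)*M$$(n-1,n-1) - M$$(j,n-1)*M$$(n-1,i))
   - M$$(i,i)*(M$$(j,0)*M$$(n-1,n-1) - M$$(j,n-1)*M$$(n-1,0))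
   + M$$(i,n-1)*(M$$(j,0)*M$$(n-1,i) - M$$(j,i)*M$$(n-1,0)) = 0"
    by (rule minor3[OF Mc _ _ _ _ _ _ rank2[OF M]]) (use ij in auto)
  have "M$$(i,0) * ?D = - (M$$(0,0) * (M$$(i,i)*M$$(j,n-1) - M$$(i,n-1)*M$$(j,i))
   - M$$(0,i)*(M$$(i,0)*M$$(j,n-1) - M$$(i,n-1)*M$$(j,0))
   + M$$(0,n-1)*(M$$(i,0)*M$$(j,i) - M$$(i,i)*M$$(j,0)))" unfolding e by (simp add: algebra_simps)
  hence "M$$(i,0) * ?D = 0" unfolding m1 by simp
  hence x0: "M$$(i,0) = 0" using D by simp
  have "M$$(i,n-1) * ?D = - (M$$(i,0) * (M$$(j,i)*M$$(n-1,n-1) - M$$(j,n-1)*M$$(n-1,i))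
   - M$$(i,i)*(M$$(j,0)*M$$(n-1,n-1) - M$$(j,n-1)*M$$(n-1,0))
   + M$$(i,n-1)*(M$$(j,0)*M$$(n-1,i) - M$$(j,i)*M$$(n-1,0)))" unfolding e by (simp add: algebra_simps)
  hence "M$$(i,n-1) * ?D = 0" unfolding m2 by simp
  hence y0: "M$$(i,n-1) = 0" using D by simp
  show False using D x0 y0 by simp
qed

lemma FA: assumes M: "M \<in> S" and ij: "0 < i" "i < n - 1" "0 < j" "j < n - 1"
  shows "M$$(i,0)*M$$(j,n-1) = M$$(j,0)*M$$(i,n-1)"
proof -
  consider "i < j" | "i = j" | "j < i" by linarith
  thus ?thesis
  proof cases
    case 1 thus ?thesis using FA_lt[OF M] ij by auto
  next
    case 2 thus ?thesis by simp
  next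
    case 3 thus ?thesis using FA_lt[OF M, of j i] ij by (simp add: mult.commute)
  qed
qed

lemma FB: assumes M: "M \<in> S" and i: "0 < i" "i < n - 1"
  shows "M$$(0,0)*M$$(i,n-1)^2 + M$$(i,0)^2*M$$(n-1,n-1) - 2*M$$(0,n-1)*M$$(i,0)*M$$(i,n-1) = 0"
proof -
  have Mc: "M \<in> carrier_mat n n" by (rule carr[OF M])
  have e: "M$$(0,i) = M$$(i,0)" "M$$(n-1,i) = M$$(i,n-1)" "M$$(i,i) = 0" "M$$(n-1,0) = M$$(0,n-1)"
    using symm[OF M] zero_mid[OF M] i by auto
  have m: "M$$(0,0) * (M$$(i,i)*M$$(n-1,n-1) - M$$(i,n-1)*M$$(n-1,i))
   - M$$(0,i)*(M$$(i,0)*M$$(n-1,n-1) - M$$(i,n-1)*M$$(n-1,0))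
   + M$$(0,n-1)*(M$$(i,0)*M$$(n-1,i) - M$$(i,i)*M$$(n-1,0)) = 0"
    by (rule minor3[OF Mc _ _ _ _ _ _ rank2[OF M]]) (use i in auto)
  show ?thesis using m unfolding e by (simp add: algebra_simps power2_eq_square)
qed


definition indep :: "'a mat \<Rightarrow> 'a mat \<Rightarrow> bool" where
  "indep M N \<longleftrightarrow> (\<forall>\<alpha> \<beta>. (\<forall>i. 0 < i \<longrightarrow> i < n - 1 \<longrightarrow> \<alpha> * M$$(i,0) + \<beta> * N$$(i,0) = 0) \<longrightarrow> \<alpha> = 0 \<and> \<beta> = 0)"

definition ratio :: "'a mat \<Rightarrow> 'a \<Rightarrow> bool" where
  "ratio M \<mu> \<longleftrightarrow> (\<forall>i. 0 < i \<longrightarrow> i < n - 1 \<longrightarrow> M$$(i,n-1) = \<mu> * M$$(i,0))"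

lemma ratio_ex: assumes M: "M \<in> S" and k: "0 < k" "k < n - 1" "M$$(k,0) \<noteq> 0"
  shows "ratio M (M$$(k,n-1) / M$$(k,0))"
  unfolding ratio_def
proof (intro allI impI)
  fix j assume j: "0 < j" "j < n - 1"
  have "M$$(k,0)*M$$(j,n-1) = M$$(j,0)*M$$(k,n-1)" by (rule FA[OF M k(1,2) j])
  thus "M$$(j,n-1) = M$$(k,n-1) / M$$(k,0) * M$$(j,0)" using k(3)
    by (simp add: field_simps)
qed

lemma indep_nz1: "indep M N \<Longrightarrow> \<exists>k. 0 < k \<and> k < n - 1 \<and> M$$(k,0) \<noteq> 0"
  unfolding indep_def by (metis (no_types) add.right_neutral mult_1 mult_zero_left one_neq_zero)

lemma indep_nz2: "indep M N \<Longrightarrow> \<exists>k. 0 < k \<and> k < n - 1 \<and> N$$(k,0) \<noteq> 0"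
  unfolding indep_def by (metis (no_types) add_0 mult_1 mult_zero_left one_neq_zero)

lemma indep_nz_sum: assumes "M \<in> S" "N \<in> S" "indep M N"
  shows "\<exists>k. 0 < k \<and> k < n - 1 \<and> (M+N)$$(k,0) \<noteq> 0"
proof (rule ccontr)
  assume "\<not> ?thesis"
  hence h: "\<And>i. 0 < i \<Longrightarrow> i < n - 1 \<Longrightarrow> (M+N)$$(i,0) = 0" by auto
  have "\<forall>i. 0 < i \<longrightarrow> i < n - 1 \<longrightarrow> 1 * M$$(i,0) + 1 * N$$(i,0) = 0"
  proof (intro allI impI)
    fix i assume i: "0 < i" "i < n - 1"
    have "(M+N)$$(i,0) = M$$(i,0) + N$$(i,0)" by (rule add_idx[OF assms(1,2)]) (use i in auto)
    thus "1 * M$$(i,0) + 1 * N$$(i,0) = 0" using h[OF i] by simp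
  qed
  hence "(1::'a) = 0 \<and> (1::'a) = 0" using assms(3) unfolding indep_def by blast
  thus False by simp
qed

lemma ratio_eq: assumes M: "M \<in> S" and N: "N \<in> S" and ind: "indep M N"
  and rM: "ratio M \<mu>" and rN: "ratio N \<nu>" shows "\<mu> = \<nu>"
proof -
  obtain k where k: "0 < k" "k < n - 1" "(M+N)$$(k,0) \<noteq> 0" using indep_nz_sum[OF M N ind] by blast
  have MN: "M + N \<in> S" using sub_props(3)[OF M N] .
  define \<rho> where "\<rho> = (M+N)$$(k,n-1) / (M+N)$$(k,0)"
  have r: "ratio (M+N) \<rho>" unfolding \<rho>_def by (rule ratio_ex[OF MN k])
  have "\<forall>i. 0 < i \<longrightarrow> i < n - 1 \<longrightarrow> (\<mu> - \<rho>) * M$$(i,0) + (\<nu> - \<rho>) * N$$(i,0) = 0"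
  proof (intro allI impI)
    fix i assume i: "0 < i" "i < n - 1"
    have in1: "i < n" "n - 1 < n" "0 < n" using i n3 by auto
    have a1: "(M+N)$$(i,n-1) = \<rho> * (M+N)$$(i,0)" using r i unfolding ratio_def by auto
    have a2: "M$$(i,n-1) = \<mu> * M$$(i,0)" "N$$(i,n-1) = \<nu> * N$$(i,0)"
      using rM rN i unfolding ratio_def by auto
    have a3: "(M+N)$$(i,n-1) = M$$(i,n-1) + N$$(i,n-1)" "(M+N)$$(i,0) = M$$(i,0) + N$$(i,0)"
      using add_idx[OF M N] in1 by auto
    have "\<mu> * M$$(i,0) + \<nu> * N$$(i,0) = \<rho> * (M$$(i,0) + N$$(i,0))"
      using a1 unfolding a3 a2 .
    thus "(\<mu> - \<rho>) * M$$(i,0) + (\<nu> - \<rho>) * N$$(i,0) = 0"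
      by (simp add: algebra_simps)
  qed
  hence "\<mu> - \<rho> = 0 \<and> \<nu> - \<rho> = 0" using ind unfolding indep_def by blast
  thus ?thesis by simp
qed

lemma not_both: assumes ind: "indep M1 M2" and k: "0 < k" "k < n - 1" "M$$(k,0) \<noteq> 0"
  and n1: "\<not> indep M M1" and n2: "\<not> indep M M2" shows False
proof -
  obtain \<alpha> \<beta> where ab: "\<forall>i. 0 < i \<longrightarrow> i < n - 1 \<longrightarrow> \<alpha> * M$$(i,0) + \<beta> * M1$$(i,0) = 0"
    and ab0: "\<alpha> \<noteq> 0 \<or> \<beta> \<noteq> 0" using n1 unfolding indep_def by blast
  obtain \<gamma> \<delta> where cd: "\<forall>i. 0 < i \<longrightarrow> i < n - 1 \<longrightarrow> \<gamma> * M$$(i,0) + \<delta> * M2$$(i,0) = 0"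
    and cd0: "\<gamma> \<noteq> 0 \<or> \<delta> \<noteq> 0" using n2 unfolding indep_def by blast
  obtain k1 where k1: "0 < k1" "k1 < n - 1" "M1$$(k1,0) \<noteq> 0" using indep_nz1[OF ind] by blast
  obtain k2 where k2: "0 < k2" "k2 < n - 1" "M2$$(k2,0) \<noteq> 0" using indep_nz2[OF ind] by blast
  have a: "\<alpha> \<noteq> 0"
  proof
    assume "\<alpha> = 0"
    hence "\<beta> \<noteq> 0" using ab0 by simp
    moreover have "\<beta> * M1$$(k1,0) = 0" using ab k1 \<open>\<alpha> = 0\<close> by auto
    ultimately show False using k1 by simp
  qed
  have c: "\<gamma> \<noteq> 0"
  proof
    assume "\<gamma> = 0"
    hence "\<delta> \<noteq> 0" using cd0 by simp
    moreover have "\<delta> * M2$$(k2,0) = 0" using cd k2 \<open>\<gamma> = 0\<close> by auto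
    ultimately show False using k2 by simp
  qed
  have bd: "\<gamma> * \<beta> \<noteq> 0 \<or> \<alpha> * \<delta> \<noteq> 0"
  proof (rule ccontr)
    assume "\<not> ?thesis"
    hence "\<beta> = 0" using a c by simp
    hence "\<alpha> * M$$(k,0) = 0" using ab k by auto
    thus False using a k by simp
  qed
  have "\<forall>i. 0 < i \<longrightarrow> i < n - 1 \<longrightarrow> (\<gamma> * \<beta>) * M1$$(i,0) + (- (\<alpha> * \<delta>)) * M2$$(i,0) = 0"
  proof (intro allI impI)
    fix i assume i: "0 < i" "i < n - 1"
    have e1: "\<alpha> * M$$(i,0) + \<beta> * M1$$(i,0) = 0" using ab i by auto
    have e2: "\<gamma> * M$$(i,0) + \<delta> * M2$$(i,0) = 0" using cd i by auto
    have "(\<gamma> * \<beta>) * M1$$(i,0) + (- (\<alpha> * \<delta>)) * M2$$(i,0)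
       = \<gamma> * (\<alpha> * M$$(i,0) + \<beta> * M1$$(i,0)) - \<alpha> * (\<gamma> * M$$(i,0) + \<delta> * M2$$(i,0))"
      by (simp add: algebra_simps)
    thus "(\<gamma> * \<beta>) * M1$$(i,0) + (- (\<alpha> * \<delta>)) * M2$$(i,0) = 0" using e1 e2 by simp
  qed
  hence "\<gamma> * \<beta> = 0 \<and> - (\<alpha> * \<delta>) = 0" using ind unfolding indep_def by blast
  thus False using bd by simp
qed

lemma lam_exists: assumes M1: "M1 \<in> S" and M2: "M2 \<in> S" and ind: "indep M1 M2"
  shows "\<exists>lam. \<forall>M\<in>S. ratio M lam"
proof -
  obtain k1 where k1: "0 < k1" "k1 < n - 1" "M1$$(k1,0) \<noteq> 0" using indep_nz1[OF ind] by blast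
  define lam where "lam = M1$$(k1,n-1) / M1$$(k1,0)"
  have r1: "ratio M1 lam" unfolding lam_def by (rule ratio_ex[OF M1 k1])
  obtain k2 where k2: "0 < k2" "k2 < n - 1" "M2$$(k2,0) \<noteq> 0" using indep_nz2[OF ind] by blast
  have r2: "ratio M2 lam"
    using ratio_eq[OF M1 M2 ind r1 ratio_ex[OF M2 k2]] ratio_ex[OF M2 k2] by simp
  have nzcase: "ratio M lam" if M: "M \<in> S" and k: "0 < k" "k < n - 1" "M$$(k,0) \<noteq> 0" for M k
  proof -
    define \<mu> where "\<mu> = M$$(k,n-1) / M$$(k,0)"
    have r: "ratio M \<mu>" unfolding \<mu>_def by (rule ratio_ex[OF M k])
    have "indep M M1 \<or> indep M M2" using not_both[OF ind k] by blast
    thus ?thesis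
    proof
      assume "indep M M1" thus ?thesis using ratio_eq[OF M M1 _ r r1] r by simp
    next
      assume "indep M M2" thus ?thesis using ratio_eq[OF M M2 _ r r2] r by simp
    qed
  qed
  have "ratio M lam" if M: "M \<in> S" for M
  proof (cases "\<exists>k. 0 < k \<and> k < n - 1 \<and> M$$(k,0) \<noteq> 0")
    case True thus ?thesis using nzcase M by blast
  next
    case False
    have MM: "M + M1 \<in> S" using sub_props(3)[OF M M1] .
    have "(M+M1)$$(k1,0) \<noteq> 0" using False add_idx[OF M M1, of k1 0] k1 n3 by auto
    hence rs: "ratio (M + M1) lam" using nzcase[OF MM k1(1,2)] by simp
    show ?thesis unfolding ratio_def
    proof (intro allI impI)
      fix i assume i: "0 < i" "i < n - 1"
      have "(M+M1)$$(i,n-1) = lam * (M+M1)$$(i,0)" using rs i unfolding ratio_def by auto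
      moreover have "M1$$(i,n-1) = lam * M1$$(i,0)" using r1 i unfolding ratio_def by auto
      moreover have "M$$(i,0) = 0" using False i by auto
      ultimately show "M$$(i,n-1) = lam * M$$(i,0)"
        using add_idx[OF M M1, of i 0] add_idx[OF M M1, of i "n-1"] i by (simp add: algebra_simps)
    qed
  qed
  thus ?thesis by blast
qed

lemma no_indep_span: assumes "\<forall>M1\<in>S. \<forall>M2\<in>S. \<not> indep M1 M2"
  shows "\<exists>v. \<forall>M\<in>S. \<exists>c. \<forall>i. 0 < i \<longrightarrow> i < n - 1 \<longrightarrow> M$$(i,0) = c * v i"
proof (cases "\<exists>M0\<in>S. \<exists>k. 0 < k \<and> k < n - 1 \<and> M0$$(k,0) \<noteq> 0")
  case False
  show ?thesis
  proof (intro exI[of _ "\<lambda>_. 0"] ballI exI[of _ 0] allI impI)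
    fix M i assume "M \<in> S" "0 < i" "i < n - 1"
    thus "M$$(i,0) = 0 * (\<lambda>_. 0) i" using False by auto
  qed
next
  case True
  then obtain M0 k where M0: "M0 \<in> S" and k: "0 < k" "k < n - 1" "M0$$(k,0) \<noteq> 0" by blast
  have "\<exists>c. \<forall>i. 0 < i \<longrightarrow> i < n - 1 \<longrightarrow> M$$(i,0) = c * M0$$(i,0)" if M: "M \<in> S" for M
  proof -
    obtain \<alpha> \<beta> where ab: "\<forall>i. 0 < i \<longrightarrow> i < n - 1 \<longrightarrow> \<alpha> * M$$(i,0) + \<beta> * M0$$(i,0) = 0"
      and ab0: "\<alpha> \<noteq> 0 \<or> \<beta> \<noteq> 0"
    proof -
      have "\<not> indep M M0" using assms M M0 by blast
      thus ?thesis using that unfolding indep_def by blast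
    qed
    have a: "\<alpha> \<noteq> 0"
    proof
      assume "\<alpha> = 0"
      hence "\<beta> \<noteq> 0" using ab0 by simp
      moreover have "\<beta> * M0$$(k,0) = 0" using ab k \<open>\<alpha> = 0\<close> by auto
      ultimately show False using k by simp
    qed
    have "\<forall>i. 0 < i \<longrightarrow> i < n - 1 \<longrightarrow> M$$(i,0) = (- \<beta> / \<alpha>) * M0$$(i,0)"
    proof (intro allI impI)
      fix i assume i: "0 < i" "i < n - 1"
      have "\<alpha> * M$$(i,0) + \<beta> * M0$$(i,0) = 0" using ab i by auto
      hence "\<alpha> * M$$(i,0) = - (\<beta> * M0$$(i,0))" by (simp add: eq_neg_iff_add_eq_0)
      hence "M$$(i,0) = - (\<beta> * M0$$(i,0)) / \<alpha>" using a by (simp add: field_simps)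
      thus "M$$(i,0) = (- \<beta> / \<alpha>) * M0$$(i,0)" by simp
    qed
    thus ?thesis by blast
  qed
  thus ?thesis by (intro exI[of _ "\<lambda>i. M0$$(i,0)"]) blast
qed

end

context setup47 begin

lemma dprime_zero: assumes r: "\<forall>M\<in>S. ratio M lam" and M1: "M1 \<in> S"
  and k1: "0 < k1" "k1 < n - 1" "M1$$(k1,0) \<noteq> 0"
  shows "\<forall>M\<in>S. M$$(n-1,n-1) - 2*lam*M$$(0,n-1) + lam^2*M$$(0,0) = 0"
proof -
  have nzc: "M$$(n-1,n-1) - 2*lam*M$$(0,n-1) + lam^2*M$$(0,0) = 0"
    if M: "M \<in> S" and k: "0 < k" "k < n - 1" "M$$(k,0) \<noteq> 0" for M k
  proof -
    have y: "M$$(k,n-1) = lam * M$$(k,0)" using r M k unfolding ratio_def by auto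
    have fb: "M$$(0,0)*M$$(k,n-1)^2 + M$$(k,0)^2*M$$(n-1,n-1) - 2*M$$(0,n-1)*M$$(k,0)*M$$(k,n-1) = 0"
      by (rule FB[OF M k(1,2)])
    have "M$$(k,0)^2 * (M$$(n-1,n-1) - 2*lam*M$$(0,n-1) + lam^2*M$$(0,0)) =
       M$$(0,0)*M$$(k,n-1)^2 + M$$(k,0)^2*M$$(n-1,n-1) - 2*M$$(0,n-1)*M$$(k,0)*M$$(k,n-1)"
      unfolding y by (simp add: algebra_simps power2_eq_square)
    hence "M$$(k,0)^2 * (M$$(n-1,n-1) - 2*lam*M$$(0,n-1) + lam^2*M$$(0,0)) = 0" unfolding fb .
    thus ?thesis using k(3) by simp
  qed
  show ?thesis
  proof
    fix M assume M: "M \<in> S"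
    show "M$$(n-1,n-1) - 2*lam*M$$(0,n-1) + lam^2*M$$(0,0) = 0"
    proof (cases "\<exists>k. 0 < k \<and> k < n - 1 \<and> M$$(k,0) \<noteq> 0")
      case True thus ?thesis using nzc M by blast
    next
      case False
      have MM: "M + M1 \<in> S" using sub_props(3)[OF M M1] .
      have in1: "k1 < n" "n - 1 < n" "0 < n" using k1 n3 by auto
      have "(M+M1)$$(k1,0) = M$$(k1,0) + M1$$(k1,0)" using add_idx[OF M M1] in1 by auto
      also have "M$$(k1,0) = 0" using False k1 by auto
      finally have "(M+M1)$$(k1,0) \<noteq> 0" using k1 by simp
      hence e: "(M+M1)$$(n-1,n-1) - 2*lam*(M+M1)$$(0,n-1) + lam^2*(M+M1)$$(0,0) = 0"
        using nzc[OF MM k1(1,2)] by simp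
      have e1: "M1$$(n-1,n-1) - 2*lam*M1$$(0,n-1) + lam^2*M1$$(0,0) = 0"
        using nzc[OF M1 k1] .
      have a: "(M+M1)$$(n-1,n-1) = M$$(n-1,n-1) + M1$$(n-1,n-1)" "(M+M1)$$(0,n-1) = M$$(0,n-1) + M1$$(0,n-1)"
        "(M+M1)$$(0,0) = M$$(0,0) + M1$$(0,0)" using add_idx[OF M M1] in1 by auto
      have "M$$(n-1,n-1) - 2*lam*M$$(0,n-1) + lam^2*M$$(0,0) =
        ((M+M1)$$(n-1,n-1) - 2*lam*(M+M1)$$(0,n-1) + lam^2*(M+M1)$$(0,0))
        - (M1$$(n-1,n-1) - 2*lam*M1$$(0,n-1) + lam^2*M1$$(0,0))"
        unfolding a by (simp add: algebra_simps)
      thus ?thesis unfolding e e1 by simp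
    qed
  qed
qed

lemma ul_idx: "i < n - 1 \<Longrightarrow> j < n - 1 \<Longrightarrow> upper_left n M $$ (i,j) = M $$ (i,j)"
  unfolding upper_left_def by simp

lemma ul_dims[simp]: "dim_row (upper_left n M) = n - 1" "dim_col (upper_left n M) = n - 1"
  unfolding upper_left_def by simp_all

lemma ul_subspace: "mat_subspace (n - 1) (upper_left n ` S)"
  unfolding mat_subspace_iff
proof (intro conjI ballI allI)
  show "upper_left n ` S \<subseteq> carrier_mat (n - 1) (n - 1)"
  proof
    fix X assume "X \<in> upper_left n ` S"
    then obtain M where XM: "X = upper_left n M" by blast
    show "X \<in> carrier_mat (n - 1) (n - 1)" unfolding XM by (rule carrier_matI) simp_all
  qed
  have "upper_left n (0\<^sub>m n n :: 'a mat) = 0\<^sub>m (n-1) (n-1)"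
  proof (rule eq_matI)
    fix i j assume "i < dim_row (0\<^sub>m (n - 1) (n - 1) :: 'a mat)" "j < dim_col (0\<^sub>m (n - 1) (n - 1) :: 'a mat)"
    hence ij: "i < n - 1" "j < n - 1" by simp_all
    have "i < n" "j < n" using ij by simp_all
    show "upper_left n (0\<^sub>m n n) $$ (i, j) = (0\<^sub>m (n - 1) (n - 1) :: 'a mat) $$ (i, j)"
      using ij \<open>i < n\<close> \<open>j < n\<close> by (simp add: ul_idx)
  qed simp_all
  thus "0\<^sub>m (n - 1) (n - 1) \<in> upper_left n ` S" by (rule image_eqI[OF sym sub_props(2)])
next
  fix A B assume "A \<in> upper_left n ` S" "B \<in> upper_left n ` S"
  then obtain A' B' where A': "A' \<in> S" "A = upper_left n A'" and B': "B' \<in> S" "B = upper_left n B'" by blast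
  have cA: "A' \<in> carrier_mat n n" "B' \<in> carrier_mat n n" using carr A'(1) B'(1) by auto
  have "A + B = upper_left n (A' + B')"
  proof (rule eq_matI)
    fix i j assume "i < dim_row (upper_left n (A' + B'))" "j < dim_col (upper_left n (A' + B'))"
    hence ij: "i < n - 1" "j < n - 1" by simp_all
    have "i < n" "j < n" using ij by simp_all
    show "(A + B) $$ (i, j) = upper_left n (A' + B') $$ (i, j)"
      using ij \<open>i < n\<close> \<open>j < n\<close> cA unfolding A'(2) B'(2) by (simp add: ul_idx)
  qed (simp_all add: A'(2) B'(2))
  thus "A + B \<in> upper_left n ` S" using sub_props(3)[OF A'(1) B'(1)] by blast
next
  fix c A assume "A \<in> upper_left n ` S"
  then obtain A' where A': "A' \<in> S" "A = upper_left n A'" by blast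
  have cA: "A' \<in> carrier_mat n n" using carr A'(1) by auto
  have "c \<cdot>\<^sub>m A = upper_left n (c \<cdot>\<^sub>m A')"
  proof (rule eq_matI)
    fix i j assume "i < dim_row (upper_left n (c \<cdot>\<^sub>m A'))" "j < dim_col (upper_left n (c \<cdot>\<^sub>m A'))"
    hence ij: "i < n - 1" "j < n - 1" by simp_all
    have "i < n" "j < n" using ij by simp_all
    show "(c \<cdot>\<^sub>m A) $$ (i, j) = upper_left n (c \<cdot>\<^sub>m A') $$ (i, j)"
      using ij \<open>i < n\<close> \<open>j < n\<close> cA unfolding A'(2) by (simp add: ul_idx)
  qed (simp_all add: A'(2))
  thus "c \<cdot>\<^sub>m A \<in> upper_left n ` S" using sub_props(4)[OF A'(1)] by blast
qed

lemma dim_small: assumes "\<forall>M1\<in>S. \<forall>M2\<in>S. \<not> indep M1 M2"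
  shows "mat_subspace_dim (n - 1) (upper_left n ` S) \<le> 2"
proof -
  obtain v where v: "\<forall>M\<in>S. \<exists>c. \<forall>i. 0 < i \<longrightarrow> i < n - 1 \<longrightarrow> M$$(i,0) = c * v i"
    using no_indep_span[OF assms] by blast
  define E :: "'a mat" where "E = mat (n-1) (n-1) (\<lambda>(i,j). if i = 0 \<and> j = 0 then 1 else 0)"
  define V :: "'a mat" where "V = mat (n-1) (n-1) (\<lambda>(i,j). if i = 0 \<and> 0 < j then v j else if j = 0 \<and> 0 < i then v i else 0)"
  have "\<forall>X \<in> upper_left n ` S. \<exists>a b. X = a \<cdot>\<^sub>m E + b \<cdot>\<^sub>m V"
  proof
    fix X assume "X \<in> upper_left n ` S"
    then obtain M where M: "M \<in> S" and X: "X = upper_left n M" by blast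
    obtain c where c: "\<forall>i. 0 < i \<longrightarrow> i < n - 1 \<longrightarrow> M$$(i,0) = c * v i" using v M by blast
    have "X = M$$(0,0) \<cdot>\<^sub>m E + c \<cdot>\<^sub>m V"
    proof (rule eq_matI)
      fix i j assume ij: "i < dim_row (M$$(0,0) \<cdot>\<^sub>m E + c \<cdot>\<^sub>m V)" "j < dim_col (M$$(0,0) \<cdot>\<^sub>m E + c \<cdot>\<^sub>m V)"
      hence ij': "i < n - 1" "j < n - 1" by (auto simp: E_def V_def)
      have rhs: "(M$$(0,0) \<cdot>\<^sub>m E + c \<cdot>\<^sub>m V) $$ (i,j) = M$$(0,0) * E $$ (i,j) + c * V $$ (i,j)"
        using ij' by (simp add: E_def V_def)
      have lhs: "X $$ (i,j) = M $$ (i,j)" using ij' X ul_idx by simp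
      show "X $$ (i,j) = (M$$(0,0) \<cdot>\<^sub>m E + c \<cdot>\<^sub>m V) $$ (i,j)"
        unfolding rhs lhs
      proof -
        consider "i = 0" "j = 0" | "i = 0" "0 < j" | "0 < i" "j = 0" | "0 < i" "0 < j" by blast
        thus "M $$ (i,j) = M$$(0,0) * E $$ (i,j) + c * V $$ (i,j)"
        proof cases
          case 1 thus ?thesis using ij' by (simp add: E_def V_def)
        next
          case 2
          have "M$$(0,j) = M$$(j,0)" using symm[OF M] ij' by auto
          thus ?thesis using 2 ij' c by (simp add: E_def V_def)
        next
          case 3 thus ?thesis using ij' c by (simp add: E_def V_def)
        next
          case 4 thus ?thesis using ij' zero_mid[OF M] by (simp add: E_def V_def)
        qed
      qed
    qed (auto simp: X E_def V_def)
    thus "\<exists>a b. X = a \<cdot>\<^sub>m E + b \<cdot>\<^sub>m V" by blast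
  qed
  from dim_le2[OF ul_subspace _ _ this] show ?thesis by (auto simp: E_def V_def)
qed

end


lemma transpose_addrow: "transpose_mat (addrow_mat n a k l) = addrow_mat n a l k"
  by (rule eq_matI) auto

lemma cong_idx:
  fixes M :: "'a::field mat"
  assumes M: "M \<in> carrier_mat n n" and ij: "i < n" "j < n"
  shows "(addrow_mat n a (n-1) 0 * M * transpose_mat (addrow_mat n a (n-1) 0)) $$ (i,j) =
    (if j = n - 1 then a * (if i = n - 1 then a * M$$(0,0) + M$$(i,0) else M$$(i,0))
        + (if i = n - 1 then a * M$$(0,j) + M$$(i,j) else M$$(i,j))
     else (if i = n - 1 then a * M$$(0,j) + M$$(i,j) else M$$(i,j)))"
proof -
  have n0: "0 < n" using ij by auto
  have "addrow_mat n a (n-1) 0 * M = addrow a (n-1) 0 M" by (rule addrow_mat[symmetric, OF M n0])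
  moreover have "addrow a (n-1) 0 M * addrow_mat n a 0 (n-1) = addcol a (n-1) 0 (addrow a (n-1) 0 M)"
    by (rule addcol_mat[symmetric]) (use M n0 in auto)
  ultimately have e: "addrow_mat n a (n-1) 0 * M * transpose_mat (addrow_mat n a (n-1) 0) =
    addcol a (n-1) 0 (addrow a (n-1) 0 M)" by (simp add: transpose_addrow)
  show ?thesis unfolding e using M ij n0 by auto
qed

context setup47 begin

definition fcong :: "'a \<Rightarrow> 'a mat \<Rightarrow> 'a mat" where
  "fcong a M = addrow_mat n a (n-1) 0 * M * transpose_mat (addrow_mat n a (n-1) 0)"

lemma fcong_carrier: "M \<in> carrier_mat n n \<Longrightarrow> fcong a M \<in> carrier_mat n n"
  unfolding fcong_def by (auto simp: transpose_addrow)

lemma fcong_idx: "M \<in> carrier_mat n n \<Longrightarrow> i < n \<Longrightarrow> j < n \<Longrightarrow> fcong a M $$ (i,j) =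
    (if j = n - 1 then a * (if i = n - 1 then a * M$$(0,0) + M$$(i,0) else M$$(i,0))
        + (if i = n - 1 then a * M$$(0,j) + M$$(i,j) else M$$(i,j))
     else (if i = n - 1 then a * M$$(0,j) + M$$(i,j) else M$$(i,j)))"
  unfolding fcong_def by (rule cong_idx)

lemma fcong_inv: assumes M: "M \<in> carrier_mat n n" shows "fcong a (fcong (-a) M) = M"
proof (rule eq_matI)
  have F: "fcong (-a) M \<in> carrier_mat n n" by (rule fcong_carrier[OF M])
  show "dim_row (fcong a (fcong (- a) M)) = dim_row M" "dim_col (fcong a (fcong (- a) M)) = dim_col M"
    using fcong_carrier[OF F, of a] M by auto
  fix i j assume "i < dim_row M" "j < dim_col M"
  hence ij: "i < n" "j < n" using M by auto
  have n0: "0 < n" "n - 1 < n" using n3 by auto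
  note e = fcong_idx[OF F ij] fcong_idx[OF M n0(1) n0(1)] fcong_idx[OF M ij(1) n0(1)]
     fcong_idx[OF M n0(1) ij(2)] fcong_idx[OF M ij]
  have n1: "n - 1 \<noteq> 0" using n3 by auto
  show "fcong a (fcong (- a) M) $$ (i, j) = M $$ (i, j)"
    unfolding e using n1 by (auto simp: algebra_simps)
qed

lemma addrow_inv_mat: "invertible_mat (addrow_mat n (a::'a) (n-1) 0)"
proof -
  have n0: "0 < n" "n - 1 < n" "n - 1 \<noteq> 0" using n3 by auto
  have PQ: "addrow_mat n a (n-1) 0 * addrow_mat n (-a) (n-1) 0 = 1\<^sub>m n" by (rule addrow_mat_inv) (use n0 in auto)
  have QP: "addrow_mat n (-a) (n-1) 0 * addrow_mat n (-(-a)) (n-1) 0 = 1\<^sub>m n" by (rule addrow_mat_inv) (use n0 in auto)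
  show ?thesis unfolding invertible_mat_def inverts_mat_def
    using PQ QP by (intro conjI exI[of _ "addrow_mat n (-a) (n-1) 0"]) (auto simp: square_mat.simps)
qed

lemma fcong_sym: assumes M: "M \<in> S" shows "transpose_mat (fcong a M) = fcong a M"
proof -
  let ?P = "addrow_mat n a (n-1) 0"
  have Mc: "M \<in> carrier_mat n n" using carr M by auto
  have MT: "transpose_mat M = M" using symS M unfolding sym_mats_def by auto
  have c: "?P \<in> carrier_mat n n" "transpose_mat ?P \<in> carrier_mat n n" by auto
  have "transpose_mat (?P * M * transpose_mat ?P) = transpose_mat (transpose_mat ?P) * transpose_mat (?P * M)"
    by (rule transpose_mult) (use c Mc in auto)
  also have "\<dots> = ?P * (transpose_mat M * transpose_mat ?P)"
    using transpose_mult[of ?P n n M n] c Mc by simp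
  also have "\<dots> = ?P * M * transpose_mat ?P" using MT assoc_mult_mat[OF c(1) Mc c(2)] by simp
  finally show ?thesis unfolding fcong_def .
qed

lemma fcong_WS: assumes r: "\<forall>M\<in>S. ratio M lam"
  and d: "\<forall>M\<in>S. M$$(n-1,n-1) - 2*lam*M$$(0,n-1) + lam^2*M$$(0,0) = 0"
  and M: "M \<in> S" shows "fcong (-lam) M \<in> WS_10 n"
proof -
  have Mc: "M \<in> carrier_mat n n" using carr M by auto
  have sm: "fcong (-lam) M \<in> sym_mats n"
    unfolding sym_mats_def using fcong_carrier[OF Mc] fcong_sym[OF M] by auto
  have z: "fcong (-lam) M $$ (i,j) = 0" if ij: "0 < i" "0 < j" "i < n" "j < n" for i j
  proof -
    have idx: "fcong (-lam) M $$ (i,j) =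
    (if j = n - 1 then -lam * (if i = n - 1 then -lam * M$$(0,0) + M$$(i,0) else M$$(i,0))
        + (if i = n - 1 then -lam * M$$(0,j) + M$$(i,j) else M$$(i,j))
     else (if i = n - 1 then -lam * M$$(0,j) + M$$(i,j) else M$$(i,j)))"
      by (rule fcong_idx[OF Mc ij(3,4)])
    consider "i = n - 1" "j = n - 1" | "i = n - 1" "j \<noteq> n - 1" | "i \<noteq> n - 1" "j = n - 1" | "i \<noteq> n - 1" "j \<noteq> n - 1"
      by blast
    thus ?thesis
    proof cases
      case 1
      have s: "M$$(n-1,0) = M$$(0,n-1)" using symm[OF M] n3 by auto
      have "fcong (-lam) M $$ (i,j) = M$$(n-1,n-1) - 2*lam*M$$(0,n-1) + lam^2*M$$(0,0)"
        unfolding idx using 1 s by (simp add: algebra_simps power2_eq_square)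
      thus ?thesis using d M by simp
    next
      case 2
      have jm: "0 < j" "j < n - 1" using 2 ij by auto
      have s: "M$$(n-1,j) = M$$(j,n-1)" "M$$(0,j) = M$$(j,0)" using symm[OF M] ij by auto
      have y: "M$$(j,n-1) = lam * M$$(j,0)" using r M jm unfolding ratio_def by auto
      show ?thesis unfolding idx using 2 s y by simp
    next
      case 3
      have im: "0 < i" "i < n - 1" using 3 ij by auto
      have y: "M$$(i,n-1) = lam * M$$(i,0)" using r M im unfolding ratio_def by auto
      show ?thesis unfolding idx using 3 y by simp
    next
      case 4
      have "M$$(i,j) = 0" using zero_mid[OF M] 4 ij by auto
      thus ?thesis unfolding idx using 4 by simp
    qed
  qed
  show ?thesis unfolding WS_10_def using sm z by auto
qed

lemma fcong_subspace: "mat_subspace n (fcong a ` S)"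
  unfolding mat_subspace_iff
proof (intro conjI ballI allI)
  show "fcong a ` S \<subseteq> carrier_mat n n" using fcong_carrier carr by auto
  have "fcong a (0\<^sub>m n n) = 0\<^sub>m n n"
  proof (rule eq_matI)
    fix i j assume "i < dim_row (0\<^sub>m n n :: 'a mat)" "j < dim_col (0\<^sub>m n n :: 'a mat)"
    hence ij: "i < n" "j < n" by simp_all
    show "fcong a (0\<^sub>m n n) $$ (i, j) = (0\<^sub>m n n :: 'a mat) $$ (i, j)"
      unfolding fcong_idx[OF zero_carrier_mat ij] using ij n3 by simp
  qed (use fcong_carrier[OF zero_carrier_mat[of n n]] in auto)
  thus "0\<^sub>m n n \<in> fcong a ` S" by (rule image_eqI[OF sym sub_props(2)])
next
  fix A B assume "A \<in> fcong a ` S" "B \<in> fcong a ` S"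
  then obtain A' B' where A': "A' \<in> S" "A = fcong a A'" and B': "B' \<in> S" "B = fcong a B'" by blast
  have cA: "A' \<in> carrier_mat n n" "B' \<in> carrier_mat n n" using carr A'(1) B'(1) by auto
  have cAB: "A' + B' \<in> carrier_mat n n" using cA by auto
  have "A + B = fcong a (A' + B')"
  proof (rule eq_matI)
    fix i j assume "i < dim_row (fcong a (A' + B'))" "j < dim_col (fcong a (A' + B'))"
    hence ij: "i < n" "j < n" using fcong_carrier[of "A' + B'" a] cAB by auto
    have "0 < n" using ij by auto
    have s1: "(fcong a A' + fcong a B') $$ (i,j) = fcong a A' $$ (i,j) + fcong a B' $$ (i,j)"
      using fcong_carrier[of B' a] cA ij by auto
    have ad: "\<And>k l. k < n \<Longrightarrow> l < n \<Longrightarrow> (A'+B')$$(k,l) = A'$$(k,l)+B'$$(k,l)" using cA by auto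
    show "(A + B) $$ (i, j) = fcong a (A' + B') $$ (i, j)"
      unfolding A'(2) B'(2) s1 fcong_idx[OF cA(1) ij] fcong_idx[OF cA(2) ij] fcong_idx[OF cAB ij]
      using ij \<open>0 < n\<close> by (simp add: ad algebra_simps)
  qed (use fcong_carrier[of "A'+B'" a] fcong_carrier[of A' a] fcong_carrier[of B' a] cA cAB A'(2) B'(2) in auto)
  thus "A + B \<in> fcong a ` S" using sub_props(3)[OF A'(1) B'(1)] by blast
next
  fix c A assume "A \<in> fcong a ` S"
  then obtain A' where A': "A' \<in> S" "A = fcong a A'" by blast
  have cA: "A' \<in> carrier_mat n n" using carr A'(1) by auto
  have cAB: "c \<cdot>\<^sub>m A' \<in> carrier_mat n n" using cA by auto
  have "c \<cdot>\<^sub>m A = fcong a (c \<cdot>\<^sub>m A')"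
  proof (rule eq_matI)
    fix i j assume "i < dim_row (fcong a (c \<cdot>\<^sub>m A'))" "j < dim_col (fcong a (c \<cdot>\<^sub>m A'))"
    hence ij: "i < n" "j < n" using fcong_carrier[of "c \<cdot>\<^sub>m A'" a] cAB by auto
    have "0 < n" using ij by auto
    have s1: "(c \<cdot>\<^sub>m fcong a A') $$ (i,j) = c * fcong a A' $$ (i,j)"
      using fcong_carrier[of A' a] cA ij by auto
    have ad: "\<And>k l. k < n \<Longrightarrow> l < n \<Longrightarrow> (c \<cdot>\<^sub>m A')$$(k,l) = c * A'$$(k,l)" using cA by auto
    show "(c \<cdot>\<^sub>m A) $$ (i, j) = fcong a (c \<cdot>\<^sub>m A') $$ (i, j)"
      unfolding A'(2) s1 fcong_idx[OF cA ij] fcong_idx[OF cAB ij]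
      using ij \<open>0 < n\<close> by (simp add: ad algebra_simps)
  qed (use fcong_carrier[of "c \<cdot>\<^sub>m A'" a] fcong_carrier[of A' a] cA cAB A'(2) in auto)
  thus "c \<cdot>\<^sub>m A \<in> fcong a ` S" using sub_props(4)[OF A'(1)] by blast
qed

end

theorem lemma4p7:
  fixes S :: "'a::field mat set" and n :: nat
  assumes "n \<ge> 3"
    and "mat_subspace n S"
    and "S \<subseteq> sym_mats n"
    and "\<forall>M \<in> S. mat_rank M \<le> 2"
    and "upper_left n ` S \<subseteq> WS_10 (n - 1)"
    and "mat_subspace_dim (n - 1) (upper_left n ` S) > 2"
  shows "\<exists>W. mat_subspace n W \<and> W \<subseteq> WS_10 n \<and> congruent_sets n S W"
proof -
  interpret setup47 S n using assms(1-5) by unfold_locales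
  show ?thesis
  proof (cases "\<exists>M1\<in>S. \<exists>M2\<in>S. indep M1 M2")
    case False
    hence "mat_subspace_dim (n - 1) (upper_left n ` S) \<le> 2" using dim_small by blast
    thus ?thesis using assms(6) by simp
  next
    case True
    then obtain M1 M2 where M1: "M1 \<in> S" and M2: "M2 \<in> S" and ind: "indep M1 M2" by blast
    obtain lam where r: "\<forall>M\<in>S. ratio M lam" using lam_exists[OF M1 M2 ind] by blast
    obtain k1 where k1: "0 < k1" "k1 < n - 1" "M1$$(k1,0) \<noteq> 0" using indep_nz1[OF ind] by blast
    have d: "\<forall>M\<in>S. M$$(n-1,n-1) - 2*lam*M$$(0,n-1) + lam^2*M$$(0,0) = 0"
      by (rule dprime_zero[OF r M1 k1])
    let ?W = "fcong (-lam) ` S"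
    have "S = (\<lambda>M. addrow_mat n lam (n-1) 0 * M * transpose_mat (addrow_mat n lam (n-1) 0)) ` ?W"
    proof -
      have "(\<lambda>M. addrow_mat n lam (n-1) 0 * M * transpose_mat (addrow_mat n lam (n-1) 0)) ` ?W
          = (\<lambda>M. fcong lam (fcong (-lam) M)) ` S" unfolding fcong_def image_image ..
      also have "\<dots> = (\<lambda>M. M) ` S" by (rule image_cong) (use fcong_inv carr in auto)
      finally show ?thesis by simp
    qed
    hence "congruent_sets n S ?W" unfolding congruent_sets_def
      using addrow_inv_mat[of lam] by (intro bexI[of _ "addrow_mat n lam (n-1) 0"]) auto
    moreover have "?W \<subseteq> WS_10 n" using fcong_WS[OF r d] by auto
    ultimately show ?thesis using fcong_subspace by blast
  qed
qed


end
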